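(* Let $m\ge1$, $n\ge1$, let $K\in\{\mathbb{R},\mathbb{C}\}$, and let $\mathcal{Z}$ be either $\mathbb{Z}^m$ or $\{t\in\mathbb{Z}^m\mid t\ge t_1\}$ for some $t_1\in\mathbb{Z}^m$. Let $T=(T^1,\dots,T^m)\in\mathbb{N}^m$, $T\ne0$. Let $A_\alpha\colon\mathcal{Z}\to\mathcal{M}_n(K)$, $\alpha\in\{1,\dots,m\}$, satisfy $$A_\alpha(t+1_\beta)A_\beta(t)=A_\beta(t+1_\alpha)A_\alpha(t),\quad \forall t\in\mathcal{Z},\ \forall\alpha,\beta,$$ and suppose each $A_\alpha$ is periodic of period $T$, i.e. $A_\alpha(t+T)=A_\alpha(t)$ for all $t\in\mathcal{Z}$. Let $C(t)=\chi(t+T,t)$ for $t\in\mathcal{Z}$. Then: (a) for every $\alpha$ and $k\in\mathbb{N}$, $C_{\alpha,k}(t+T)=C_{\alpha,k}(t)$ for all $t\in\mathcal{Z}$; (b) $\chi(t+T,s)=\chi(t,s)\,C(s)$ for all $t,s\in\mathcal{Z}$ with $t\ge s$; (c) for all $s\in\mathcal{Z}$, $$C(s)=\left[\prod_{\alpha=1}^{m-1}C_{\alpha,T^\alpha}(s^1,\dots,s^\alpha,s^{\alpha+1}+T^{\alpha+1},\dots,s^m+T^m)\right]C_{m,T^m}(s^1,\dots,s^m),$$ where the product is ordered with $\alpha=1$ leftmost.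
   Context: $\mathbb{N}=\{0,1,2,\dots\}$; $1_\alpha\in\mathbb{Z}^m$ has $1$ in position $\alpha$ and $0$ elsewhere; $s\le t$ in $\mathbb{Z}^m$ means $s^\alpha\le t^\alpha$ for all $\alpha$. $C_{\alpha,0}(t)=I_n$ and $C_{\alpha,k}(t)=A_\alpha(t+(k-1)1_\alpha)\cdots A_\alpha(t+1_\alpha)A_\alpha(t)$ for $k\ge1$. Under the compatibility relations, for each $s\in\mathcal{Z}$ there is a unique $\chi(\cdot,s)\colon\{t\in\mathcal{Z}\mid t\ge s\}\to\mathcal{M}_n(K)$ with $\chi(s,s)=I_n$ and $\chi(t+1_\alpha,s)=A_\alpha(t)\chi(t,s)$ for all $t\ge s$ and all $\alpha$ (the transition matrix). *)

theory Defs
  imports "HOL-Analysis.Analysis"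
begin

text \<open>Points of Z^m are functions nat => int, supported on the index set {1..m}.
  Matrices in M_n(K) are elements of 'a^'n^'n.\<close>

definition Zm :: "nat \<Rightarrow> (nat \<Rightarrow> int) set" where
  "Zm m = {t. \<forall>i. i \<notin> {1..m} \<longrightarrow> t i = 0}"

definition shift :: "(nat \<Rightarrow> int) \<Rightarrow> nat \<Rightarrow> nat \<Rightarrow> (nat \<Rightarrow> int)" where
  "shift t \<alpha> k = t(\<alpha> := t \<alpha> + int k)"

definition addT :: "(nat \<Rightarrow> int) \<Rightarrow> (nat \<Rightarrow> nat) \<Rightarrow> (nat \<Rightarrow> int)" where
  "addT t T = (\<lambda>i. t i + int (T i))"

fun Cak :: "(nat \<Rightarrow> (nat \<Rightarrow> int) \<Rightarrow> 'a::semiring_1^'n^'n) \<Rightarrow> nat \<Rightarrow> nat \<Rightarrow> (nat \<Rightarrow> int) \<Rightarrow> 'a^'n^'n" where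
  "Cak A \<alpha> 0 t = mat 1"
| "Cak A \<alpha> (Suc k) t = A \<alpha> (shift t \<alpha> k) ** Cak A \<alpha> k t"

text \<open>The transition matrix chi(., s): the unique function on {t in Z. t >= s} with
  chi(s,s) = I and chi(t+1_alpha,s) = A_alpha(t) chi(t,s); to make it a total
  function we set it to 0 outside {t in Z. t >= s}.\<close>
definition chi :: "nat \<Rightarrow> (nat \<Rightarrow> (nat \<Rightarrow> int) \<Rightarrow> 'a::semiring_1^'n^'n) \<Rightarrow> (nat \<Rightarrow> int) set
    \<Rightarrow> (nat \<Rightarrow> int) \<Rightarrow> (nat \<Rightarrow> int) \<Rightarrow> 'a^'n^'n" where
  "chi m A Z t s = (THE f. f s = mat 1
      \<and> (\<forall>u\<in>Z. s \<le> u \<longrightarrow> (\<forall>\<alpha>\<in>{1..m}. f (shift u \<alpha> 1) = A \<alpha> u ** f u))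
      \<and> (\<forall>u. \<not> (u \<in> Z \<and> s \<le> u) \<longrightarrow> f u = 0)) t"

definition ordprod :: "nat \<Rightarrow> (nat \<Rightarrow> 'a::semiring_1^'n^'n) \<Rightarrow> 'a^'n^'n" where
  "ordprod m F = foldr (\<lambda>\<alpha> M. F \<alpha> ** M) [1..<m] (mat 1)"

end

theory Submission
  imports Defs
begin

lemma shift_add: "shift (shift p b k) b l = shift p b (k + l)"
  by (auto simp: shift_def fun_eq_iff)

lemma shift_comm: "shift (shift p a x) b y = shift (shift p b y) a x"
  by (auto simp: shift_def fun_eq_iff)

lemma shift0[simp]: "shift p b 0 = p"
  by (simp add: shift_def)

lemma le_shift: "u \<le> shift u a k"
  by (auto simp: shift_def le_fun_def)

lemma foldr_mul:
  "foldr (\<lambda>b M. G b ** M) xs N = foldr (\<lambda>b M. G b ** M) xs (mat 1) ** N"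
  by (induct xs) (simp_all add: matrix_mul_assoc)

locale setting =
  fixes m :: nat and Z :: "(nat \<Rightarrow> int) set"
    and A :: "nat \<Rightarrow> (nat \<Rightarrow> int) \<Rightarrow> 'a::real_normed_field^'n^'n"
  assumes hZ: "Z = Zm m \<or> (\<exists>t1\<in>Zm m. Z = {t \<in> Zm m. t1 \<le> t})"
    and hcompat: "\<forall>t\<in>Z. \<forall>\<alpha>\<in>{1..m}. \<forall>\<beta>\<in>{1..m}.
        A \<alpha> (shift t \<beta> 1) ** A \<beta> t = A \<beta> (shift t \<alpha> 1) ** A \<alpha> t"
begin

lemma Zsub: "u \<in> Z \<Longrightarrow> u \<in> Zm m"
  using hZ by auto

lemma Zup: "s \<in> Z \<Longrightarrow> s \<le> u \<Longrightarrow> u \<in> Zm m \<Longrightarrow> u \<in> Z"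
  using hZ by (auto intro: order_trans)

lemma Zm_out: "u \<in> Zm m \<Longrightarrow> i \<notin> {1..m} \<Longrightarrow> u i = 0"
  by (simp add: Zm_def)

lemma shift_Zm: "u \<in> Zm m \<Longrightarrow> a \<in> {1..m} \<Longrightarrow> shift u a k \<in> Zm m"
  by (auto simp: Zm_def shift_def)

lemma shift_Z: "u \<in> Z \<Longrightarrow> a \<in> {1..m} \<Longrightarrow> shift u a k \<in> Z"
  by (meson Zsub Zup le_shift shift_Zm)

lemma Zind:
  assumes s: "s \<in> Z" and P0: "P s"
    and step: "\<And>u a. u \<in> Z \<Longrightarrow> s \<le> u \<Longrightarrow> a \<in> {1..m} \<Longrightarrow> P u \<Longrightarrow> P (shift u a 1)"
  shows "u \<in> Z \<Longrightarrow> s \<le> u \<Longrightarrow> P u"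
proof (induction "\<Sum>i\<in>{1..m}. nat (u i - s i)" arbitrary: u rule: less_induct)
  case less
  show ?case
  proof (cases "u = s")
    case True thus ?thesis using P0 by simp
  next
    case False
    then obtain i where i: "u i \<noteq> s i" by (auto simp: fun_eq_iff)
    have iin: "i \<in> {1..m}"
      using i Zm_out[OF Zsub[OF less.prems(1)]] Zm_out[OF Zsub[OF s]] by metis
    have lt: "s i < u i" using i less.prems(2) by (auto simp: le_fun_def less_le)
    define u' where "u' = u(i := u i - 1)"
    have u'Zm: "u' \<in> Zm m" using Zsub[OF less.prems(1)] iin by (auto simp: Zm_def u'_def)
    have su': "s \<le> u'" using less.prems(2) lt by (auto simp: le_fun_def u'_def)
    have u'Z: "u' \<in> Z" using Zup[OF s su' u'Zm] .
    have sh: "shift u' i 1 = u" by (auto simp: shift_def u'_def fun_eq_iff)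
    have "(\<Sum>j\<in>{1..m}. nat (u' j - s j)) < (\<Sum>j\<in>{1..m}. nat (u j - s j))"
      apply (rule sum_strict_mono_ex1)
        apply simp
       apply (auto simp: u'_def)[1]
      using iin lt by (auto simp: u'_def intro!: bexI[of _ i])
    then have "P u'" using less.hyps u'Z su' by blast
    then have "P (shift u' i 1)" using step u'Z su' iin by blast
    then show ?thesis using sh by simp
  qed
qed

lemma commute:
  assumes "p \<in> Z" "a \<in> {1..m}" "b \<in> {1..m}"
  shows "A a (shift p b k) ** Cak A b k p = Cak A b k (shift p a 1) ** A a p"
proof (induction k)
  case 0 thus ?case by simp
next
  case (Suc k)
  have tZ: "shift p b k \<in> Z" using shift_Z assms by blast
  have "A a (shift p b (Suc k)) ** Cak A b (Suc k) p
      = (A a (shift (shift p b k) b 1) ** A b (shift p b k)) ** Cak A b k p"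
    by (simp add: shift_add matrix_mul_assoc)
  also have "\<dots> = (A b (shift (shift p b k) a 1) ** A a (shift p b k)) ** Cak A b k p"
    using hcompat tZ assms by metis
  also have "\<dots> = A b (shift (shift p a 1) b k) ** (A a (shift p b k) ** Cak A b k p)"
    by (simp add: shift_comm matrix_mul_assoc)
  also have "\<dots> = Cak A b (Suc k) (shift p a 1) ** A a p"
    using Suc by (simp add: matrix_mul_assoc)
  finally show ?case .
qed

definition rr :: "(nat \<Rightarrow> int) \<Rightarrow> nat \<Rightarrow> (nat \<Rightarrow> int) \<Rightarrow> (nat \<Rightarrow> int)" where
  "rr s j u = (\<lambda>i. if j \<le> i then u i else s i)"

definition HH where
  "HH s j u = foldr (\<lambda>b M. Cak A b (nat (u b - s b)) (rr s (Suc b) u) ** M) [j..<Suc m] (mat 1)"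

lemma HH_step: "j \<le> m \<Longrightarrow>
   HH s j u = Cak A j (nat (u j - s j)) (rr s (Suc j) u) ** HH s (Suc j) u"
proof -
  assume "j \<le> m"
  then have "[j..<Suc m] = j # [Suc j..<Suc m]" by (simp add: upt_conv_Cons)
  then show ?thesis unfolding HH_def by simp
qed

lemma rr_Z: "s \<in> Z \<Longrightarrow> u \<in> Z \<Longrightarrow> s \<le> u \<Longrightarrow> rr s j u \<in> Z"
  apply (rule Zup[of s])
    apply simp
   apply (auto simp: rr_def le_fun_def)[1]
  using Zsub[of s] Zsub[of u] by (auto simp: Zm_def rr_def)

lemma HH_high: "a < j \<Longrightarrow> HH s j (shift u a 1) = HH s j u"
  unfolding HH_def
  apply (rule foldr_cong)
    apply simp
   apply simp
proof -
  fix x M assume "x \<in> set [j..<Suc m]" "a < j"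
  then have "x \<noteq> a" "rr s (Suc x) (shift u a 1) = rr s (Suc x) u"
    by (auto simp: rr_def shift_def fun_eq_iff)
  then show "Cak A x (nat (shift u a 1 x - s x)) (rr s (Suc x) (shift u a 1)) ** M =
       Cak A x (nat (u x - s x)) (rr s (Suc x) u) ** M"
    by (simp add: shift_def)
qed

lemma rr_shift_eq: "s \<le> u \<Longrightarrow> shift (rr s (Suc j) u) j (nat (u j - s j)) = rr s j u"
  by (auto simp: rr_def shift_def fun_eq_iff le_fun_def)

lemma HH_key:
  assumes s: "s \<in> Z" and u: "u \<in> Z" and su: "s \<le> u" and a: "a \<in> {1..m}"
  shows "j \<le> a \<Longrightarrow> 1 \<le> j \<longrightarrow> HH s j (shift u a 1) = A a (rr s j u) ** HH s j u"
proof (induction j rule: inc_induct)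
  case base
  show ?case proof

  have am: "a \<le> m" using a by simp
  have sa: "s a \<le> u a" using su by (simp add: le_fun_def)
  have n: "nat (shift u a 1 a - s a) = Suc (nat (u a - s a))"
    using sa by (simp add: shift_def)
  have r: "rr s (Suc a) (shift u a 1) = rr s (Suc a) u"
    by (auto simp: rr_def shift_def fun_eq_iff)
  have "HH s a (shift u a 1) = Cak A a (Suc (nat (u a - s a))) (rr s (Suc a) u) ** HH s (Suc a) u"
    using HH_step[OF am, of s "shift u a 1"] n r HH_high[of a "Suc a" s u] by simp
  also have "\<dots> = A a (rr s a u) ** HH s a u"
    using HH_step[OF am, of s u] rr_shift_eq[OF su, of a] by (simp add: matrix_mul_assoc)
  finally show "HH s a (shift u a 1) = A a (rr s a u) ** HH s a u" .
  qed
next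
  case (step j)
  show ?case proof
  assume j1: "1 \<le> j"
  have jm: "j \<le> m" "j \<in> {1..m}" using step a j1 by auto
  define p where "p = rr s (Suc j) u"
  have pZ: "p \<in> Z" using rr_Z s u su by (simp add: p_def)
  have n: "nat (shift u a 1 j - s j) = nat (u j - s j)"
    using step by (simp add: shift_def)
  have r: "rr s (Suc j) (shift u a 1) = shift p a 1"
    using step by (auto simp: rr_def shift_def fun_eq_iff p_def)
  have "HH s j (shift u a 1) = Cak A j (nat (u j - s j)) (shift p a 1) ** (A a p ** HH s (Suc j) u)"
    using HH_step[OF jm(1), of s "shift u a 1"] n r step.IH by (simp add: p_def)
  also have "\<dots> = (A a (shift p j (nat (u j - s j))) ** Cak A j (nat (u j - s j)) p) ** HH s (Suc j) u"
    using commute[OF pZ a jm(2)] by (simp add: matrix_mul_assoc)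
  also have "\<dots> = A a (rr s j u) ** HH s j u"
    using HH_step[OF jm(1), of s u] rr_shift_eq[OF su, of j] by (simp add: matrix_mul_assoc p_def)
  finally show "HH s j (shift u a 1) = A a (rr s j u) ** HH s j u" .
  qed
qed

lemma rr1: "s \<in> Z \<Longrightarrow> u \<in> Z \<Longrightarrow> rr s 1 u = u"
  using Zm_out[OF Zsub, of s 0] Zm_out[OF Zsub, of u 0]
  unfolding rr_def fun_eq_iff
proof (intro allI)
  fix x assume "s \<in> Z" "u \<in> Z"
  then have "s 0 = 0" "u 0 = 0" using Zm_out[OF Zsub, of s 0] Zm_out[OF Zsub, of u 0] by auto
  then show "(if 1 \<le> x then u x else s x) = u x" by (cases x) auto
qed

lemma foldr_id: "foldr (\<lambda>b M. M) xs x = x"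
  by (induct xs) simp_all

lemma HH_s: "HH s j s = mat 1"
proof -
  have "HH s j s = foldr (\<lambda>b M. M) [j..<Suc m] (mat 1)"
    unfolding HH_def by (rule foldr_cong) simp_all
  also have "\<dots> = mat 1" by (simp add: foldr_id)
  finally show ?thesis .
qed

definition isChi where
  "isChi s f \<longleftrightarrow> f s = mat 1
      \<and> (\<forall>u\<in>Z. s \<le> u \<longrightarrow> (\<forall>\<alpha>\<in>{1..m}. f (shift u \<alpha> 1) = A \<alpha> u ** f u))
      \<and> (\<forall>u. \<not> (u \<in> Z \<and> s \<le> u) \<longrightarrow> f u = 0)"

lemma exChi: "s \<in> Z \<Longrightarrow> isChi s (\<lambda>u. if u \<in> Z \<and> s \<le> u then HH s 1 u else 0)"
  unfolding isChi_def
proof (intro conjI ballI impI allI)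
  fix u a assume s: "s \<in> Z" and u: "u \<in> Z" and su: "s \<le> u" and a: "a \<in> {1..m}"
  have "shift u a 1 \<in> Z" "s \<le> shift u a 1" using shift_Z[OF u a] su le_shift order_trans by blast+
  then show "(if shift u a 1 \<in> Z \<and> s \<le> shift u a 1 then HH s 1 (shift u a 1) else 0) =
          A a u ** (if u \<in> Z \<and> s \<le> u then HH s 1 u else 0)"
    using HH_key[OF s u su a, of 1] a rr1[OF s u] u su by simp
qed (auto simp: HH_s)

lemma uniqChi: assumes "s \<in> Z" "isChi s f" "isChi s g" shows "f = g"
proof
  fix u
  show "f u = g u"
  proof (cases "u \<in> Z \<and> s \<le> u")
    case True
    show ?thesis
      apply (rule Zind[of s "\<lambda>u. f u = g u"])
      using assms True unfolding isChi_def by auto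
  next
    case False then show ?thesis using assms unfolding isChi_def by auto
  qed
qed

lemma chi_eq: "s \<in> Z \<Longrightarrow> (\<lambda>t. chi m A Z t s) = (\<lambda>u. if u \<in> Z \<and> s \<le> u then HH s 1 u else 0)"
proof -
  assume s: "s \<in> Z"
  have "(THE f. isChi s f) = (\<lambda>u. if u \<in> Z \<and> s \<le> u then HH s 1 u else 0)"
    apply (rule the_equality) using exChi[OF s] uniqChi[OF s] by auto
  moreover have "\<And>t. chi m A Z t s = (THE f. isChi s f) t" by (simp add: chi_def isChi_def)
  ultimately show ?thesis by auto
qed

lemma chi_spec: "s \<in> Z \<Longrightarrow> isChi s (\<lambda>t. chi m A Z t s)"
  using chi_eq exChi by simp

lemma chi_val: "s \<in> Z \<Longrightarrow> u \<in> Z \<Longrightarrow> s \<le> u \<Longrightarrow> chi m A Z u s = HH s 1 u"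
  using chi_eq by (metis)

lemma chi_cocycle:
  assumes s: "s \<in> Z" and r: "r \<in> Z" and sr: "s \<le> r"
  and "u \<in> Z" "r \<le> u" shows "chi m A Z u s = chi m A Z u r ** chi m A Z r s"
proof (rule Zind[OF r, where P="\<lambda>u. chi m A Z u s = chi m A Z u r ** chi m A Z r s"])
  show "chi m A Z r s = chi m A Z r r ** chi m A Z r s"
    using chi_spec[OF r] by (simp add: isChi_def)
next
  fix u a assume u: "u \<in> Z" "r \<le> u" "a \<in> {1..m}" and IH: "chi m A Z u s = chi m A Z u r ** chi m A Z r s"
  have su: "s \<le> u" using sr u order_trans by blast
  show "chi m A Z (shift u a 1) s = chi m A Z (shift u a 1) r ** chi m A Z r s"
    using chi_spec[OF s] chi_spec[OF r] u su IH unfolding isChi_def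
    by (simp add: matrix_mul_assoc)
qed (use assms in auto)

lemma addT_shift: "addT (shift t a k) T = shift (addT t T) a k"
  by (auto simp: addT_def shift_def fun_eq_iff)

lemma le_addT: "t \<le> addT t T" by (auto simp: addT_def le_fun_def)

lemma addT_mono: "s \<le> t \<Longrightarrow> addT s T \<le> addT t T" by (auto simp: addT_def le_fun_def)

lemma addT_Z: assumes "t \<in> Z" "\<forall>i. i \<notin> {1..m} \<longrightarrow> T i = 0" shows "addT t T \<in> Z"
  apply (rule Zup[OF assms(1) le_addT])
  using Zsub[OF assms(1)] assms(2) by (auto simp: Zm_def addT_def)

lemma Cak_per:
  assumes hper: "\<forall>\<alpha>\<in>{1..m}. \<forall>t\<in>Z. A \<alpha> (addT t T) = A \<alpha> t"
    and a: "a \<in> {1..m}" and t: "t \<in> Z"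
  shows "Cak A a k (addT t T) = Cak A a k t"
proof (induction k)
  case (Suc k)
  have "A a (shift (addT t T) a k) = A a (shift t a k)"
    using hper a shift_Z[OF t a] by (metis addT_shift)
  then show ?case using Suc by simp
qed simp

lemma chi_per:
  assumes hper: "\<forall>\<alpha>\<in>{1..m}. \<forall>t\<in>Z. A \<alpha> (addT t T) = A \<alpha> t"
    and hT: "\<forall>i. i \<notin> {1..m} \<longrightarrow> T i = 0"
    and s: "s \<in> Z" and t: "t \<in> Z" "s \<le> t"
  shows "chi m A Z (addT t T) (addT s T) = chi m A Z t s"
proof (rule Zind[OF s, where P="\<lambda>t. chi m A Z (addT t T) (addT s T) = chi m A Z t s"])
  have sT: "addT s T \<in> Z" using addT_Z[OF s hT] .
  show "chi m A Z (addT s T) (addT s T) = chi m A Z s s"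
    using chi_spec[OF s] chi_spec[OF sT] by (simp add: isChi_def)
next
  fix u a assume u: "u \<in> Z" "s \<le> u" "a \<in> {1..m}"
    and IH: "chi m A Z (addT u T) (addT s T) = chi m A Z u s"
  have sT: "addT s T \<in> Z" using addT_Z[OF s hT] .
  have uT: "addT u T \<in> Z" using addT_Z[OF u(1) hT] .
  have "chi m A Z (addT (shift u a 1) T) (addT s T) = A a (addT u T) ** chi m A Z (addT u T) (addT s T)"
    using chi_spec[OF sT] uT addT_mono[OF u(2)] u(3) unfolding isChi_def addT_shift by blast
  also have "\<dots> = A a u ** chi m A Z u s" using IH hper u by simp
  also have "\<dots> = chi m A Z (shift u a 1) s" using chi_spec[OF s] u unfolding isChi_def by simp
  finally show "chi m A Z (addT (shift u a 1) T) (addT s T) = chi m A Z (shift u a 1) s" .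
qed (use t in auto)

lemma part_c:
  assumes hm: "m \<ge> 1" and hT: "\<forall>i. i \<notin> {1..m} \<longrightarrow> T i = 0" and s: "s \<in> Z"
  shows "chi m A Z (addT s T) s =
         ordprod m (\<lambda>\<alpha>. Cak A \<alpha> (T \<alpha>) (\<lambda>i. if \<alpha> < i then s i + int (T i) else s i))
         ** Cak A m (T m) s"
proof -
  define G where "G = (\<lambda>\<alpha>. Cak A \<alpha> (T \<alpha>) (\<lambda>i. if \<alpha> < i then s i + int (T i) else s i))"
  have sT: "addT s T \<in> Z" using addT_Z[OF s hT] .
  have "chi m A Z (addT s T) s = HH s 1 (addT s T)"
    using chi_val[OF s sT le_addT] .
  also have "\<dots> = foldr (\<lambda>b M. G b ** M) [1..<Suc m] (mat 1)"
    unfolding HH_def G_def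
    apply (rule foldr_cong) apply simp apply simp
    apply (simp add: addT_def rr_def Suc_le_eq)
    done
  also have "[1..<Suc m] = [1..<m] @ [m]" using hm by simp
  also have "foldr (\<lambda>b M. G b ** M) ([1..<m] @ [m]) (mat 1) = ordprod m G ** G m"
    unfolding ordprod_def by (simp add: foldr_mul[of G _ "G m"])
  also have "G m = Cak A m (T m) s"
  proof -
    have "(\<lambda>i. if m < i then s i + int (T i) else s i) = s"
      using Zm_out[OF Zsub[OF s]] hT by (auto simp: fun_eq_iff)
    then show ?thesis by (simp add: G_def)
  qed
  finally show ?thesis by (simp add: G_def)
qed

end

theorem proposition2p16:
  fixes m :: nat
    and Z :: "(nat \<Rightarrow> int) set"
    and T :: "nat \<Rightarrow> nat"
    and A :: "nat \<Rightarrow> (nat \<Rightarrow> int) \<Rightarrow> 'a::real_normed_field^'n^'n"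
  assumes hm: "m \<ge> 1"
    and hZ: "Z = Zm m \<or> (\<exists>t1\<in>Zm m. Z = {t \<in> Zm m. t1 \<le> t})"
    and hTsupp: "\<forall>i. i \<notin> {1..m} \<longrightarrow> T i = 0"
    and hT0: "\<exists>i\<in>{1..m}. T i \<noteq> 0"
    and hcompat: "\<forall>t\<in>Z. \<forall>\<alpha>\<in>{1..m}. \<forall>\<beta>\<in>{1..m}.
        A \<alpha> (shift t \<beta> 1) ** A \<beta> t = A \<beta> (shift t \<alpha> 1) ** A \<alpha> t"
    and hper: "\<forall>\<alpha>\<in>{1..m}. \<forall>t\<in>Z. A \<alpha> (addT t T) = A \<alpha> t"
  shows "(\<forall>\<alpha>\<in>{1..m}. \<forall>k. \<forall>t\<in>Z. Cak A \<alpha> k (addT t T) = Cak A \<alpha> k t)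
    \<and> (\<forall>t\<in>Z. \<forall>s\<in>Z. s \<le> t \<longrightarrow>
         chi m A Z (addT t T) s = chi m A Z t s ** chi m A Z (addT s T) s)
    \<and> (\<forall>s\<in>Z. chi m A Z (addT s T) s =
         ordprod m (\<lambda>\<alpha>. Cak A \<alpha> (T \<alpha>) (\<lambda>i. if \<alpha> < i then s i + int (T i) else s i))
         ** Cak A m (T m) s)"
proof -
  interpret setting m Z A using hZ hcompat by unfold_locales
  have b: "chi m A Z (addT t T) s = chi m A Z t s ** chi m A Z (addT s T) s"
    if t: "t \<in> Z" and s: "s \<in> Z" and st: "s \<le> t" for t s
  proof -
    have sT: "addT s T \<in> Z" using addT_Z[OF s hTsupp] .
    have tT: "addT t T \<in> Z" using addT_Z[OF t hTsupp] .
    have "chi m A Z (addT t T) s = chi m A Z (addT t T) (addT s T) ** chi m A Z (addT s T) s"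
      using chi_cocycle[OF s sT le_addT tT addT_mono[OF st]] .
    then show ?thesis using chi_per[OF hper hTsupp s t st] by simp
  qed
  show ?thesis
    using Cak_per[OF hper] b part_c[OF hm hTsupp] by blast
qed

end
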